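(* Let $\phi_{car}(z)=1+z+z^2/2$ and $\Omega_{car}=\phi_{car}(\mathbb{D})$, where $\mathbb{D}=\{z\in\mathbb{C}:|z|<1\}$. For $1/2<a<5/2$, let \[r_a=\begin{cases}(2a-1)/2, & 1/2<a\le 3/2,\\ (5-2a)/2, & 3/2\le a<5/2,\end{cases}\qquad R_a=\begin{cases}(5-2a)/2, & 1/2<a\le 7/6,\\ \sqrt{(2a-1)^3/(8(a-1))}, & 7/6\le a<5/2.\end{cases}\] Then \[\{w:|w-a|<r_a\}\subseteq\Omega_{car}\subseteq\{w:|w-a|<R_a\}.\] *)

theory Defs
  imports "HOL-Analysis.Analysis"
begin

definition phi_car :: "complex \<Rightarrow> complex" where
  "phi_car z = 1 + z + z^2 / 2"

definition Omega_car :: "complex set" where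
  "Omega_car = phi_car ` ball 0 1"

definition r_a :: "real \<Rightarrow> real" where
  "r_a a = (if a \<le> 3/2 then (2*a - 1)/2 else (5 - 2*a)/2)"

definition R_a :: "real \<Rightarrow> real" where
  "R_a a = (if a \<le> 7/6 then (5 - 2*a)/2 else sqrt ((2*a - 1)^3 / (8*(a - 1))))"

end

theory Submission
  imports Defs
begin

lemma g_le1:
  fixes t c :: real assumes "0 \<le> t" "t \<le> 4" "0 < c" "c \<le> 4/3"
  shows "(1-c)*t^2 + 2*c*t + c^2 \<le> (4-c)^2"
proof -
  have h: "(4-c)^2 - ((1-c)*t^2 + 2*c*t + c^2) = (4-t)*((1-c)*t+4-2*c)" by algebra
  have "0 \<le> (1-c)*t+4-2*c"
  proof (cases "c \<le> 1")
    case True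
    then have "0 \<le> (1-c)*t" using assms by simp
    then show ?thesis using True by linarith
  next
    case False
    have "(c-1)*t \<le> (c-1)*4" using False assms by (intro mult_left_mono) auto
    then show ?thesis using assms by (simp add: algebra_simps)
  qed
  then have "0 \<le> (4-t)*((1-c)*t+4-2*c)" using assms by simp
  then show ?thesis using h by linarith
qed

lemma g_le2:
  fixes t c :: real assumes "4/3 < c"
  shows "(1-c)*t^2 + 2*c*t + c^2 \<le> c^3/(c-1)"
proof -
  have h: "c^3 - ((1-c)*t^2 + 2*c*t + c^2)*(c-1) = ((c-1)*t - c)^2" by algebra
  have "((1-c)*t^2 + 2*c*t + c^2)*(c-1) \<le> c^3" using h by (metis diff_ge_0_iff_ge zero_le_power2)
  then show ?thesis using assms by (simp add: le_divide_eq)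
qed

lemma outer_real:
  fixes x y c :: real assumes "(x-1)^2+y^2 < 1" "0<c" "c<4"
  shows "(x^2-y^2-c)^2 + (2*x*y)^2 < (if c \<le> 4/3 then (4-c)^2 else c^3/(c-1))"
proof -
  define t where "t = x^2+y^2"
  have t0: "0 \<le> t" unfolding t_def by simp
  have "(x-1)^2+y^2 = t - 2*x + 1" unfolding t_def by algebra
  then have t2x: "t < 2*x" using assms by linarith
  have x2: "x^2 \<le> t" unfolding t_def by simp
  have "x^2 < 2*x" using x2 t2x by linarith
  have x0: "0 < x" using t0 t2x by linarith
  have "x < 2"
  proof (rule ccontr)
    assume "\<not> x < 2"
    then have "2*x \<le> x*x" using x0 by (intro mult_right_mono) auto
    then show False using \<open>x^2 < 2*x\<close> by (simp add: power2_eq_square)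
  qed
  then have t4: "t < 4" using t2x by linarith
  have sq: "t^2 < (2*x)^2" using t0 t2x by (intro power_strict_mono) auto
  have eq: "(x^2-y^2-c)^2 + (2*x*y)^2 = t^2 + 2*c*t + c^2 - c*(2*x)^2" unfolding t_def by algebra
  have "c*t^2 < c*(2*x)^2" using sq assms by simp
  then have lt: "(x^2-y^2-c)^2 + (2*x*y)^2 < (1-c)*t^2 + 2*c*t + c^2" using eq by (simp add: algebra_simps)
  show ?thesis
  proof (cases "c \<le> 4/3")
    case True
    then show ?thesis using lt g_le1[of t c] t0 t4 assms by simp
  next
    case False
    then show ?thesis using lt g_le2[of c t] by simp
  qed
qed

lemma inner_real:
  fixes x y c :: real assumes "(x-1)^2+y^2 \<ge> 1" "0 \<le> x" "0<c" "c<4"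
  shows "(x^2-y^2-c)^2 + (2*x*y)^2 \<ge> (min c (4-c))^2"
proof -
  define t where "t = x^2+y^2"
  have t0: "0 \<le> t" unfolding t_def by simp
  have "(x-1)^2+y^2 = t - 2*x + 1" unfolding t_def by algebra
  then have t2x: "2*x \<le> t" using assms by linarith
  have sq: "(2*x)^2 \<le> t^2" using assms t2x by (intro power_mono) auto
  have eq: "(x^2-y^2-c)^2 + (2*x*y)^2 = t^2 + 2*c*t + c^2 - c*(2*x)^2" unfolding t_def by algebra
  have "c*(2*x)^2 \<le> c*t^2" using sq assms by simp
  then have ge: "(x^2-y^2-c)^2 + (2*x*y)^2 \<ge> (1-c)*t^2 + 2*c*t + c^2" using eq by (simp add: algebra_simps)
  have m0: "0 \<le> min c (4-c)" using assms by simp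
  show ?thesis
  proof (cases "t \<ge> 4")
    case True
    have e2: "(x^2-y^2-c)^2 + (2*x*y)^2 - (t-c)^2 = 4*c*y^2" unfolding t_def by algebra
    have "0 \<le> 4*c*y^2" using assms by simp
    moreover have "min c (4-c) \<le> t - c" using True by simp
    then have "(min c (4-c))^2 \<le> (t-c)^2" using m0 by (intro power_mono) auto
    ultimately show ?thesis using e2 by linarith
  next
    case False
    show ?thesis
    proof (cases "c \<le> 2")
      case True
      have h: "(1-c)*t^2 + 2*c*t + c^2 - c^2 = t*((1-c)*t + 2*c)" by algebra
      have "0 \<le> (1-c)*t + 2*c"
      proof (cases "c \<le> 1")
        case True
        then have "0 \<le> (1-c)*t" using t0 by simp
        then show ?thesis using assms by linarith
      next
        case False
        have "(c-1)*t \<le> (c-1)*4" using False \<open>\<not> 4 \<le> t\<close> by (intro mult_left_mono) auto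
        then show ?thesis using \<open>c \<le> 2\<close> by (simp add: algebra_simps)
      qed
      then have "0 \<le> t*((1-c)*t + 2*c)" using t0 by simp
      moreover have "min c (4-c) = c" using True by simp
      ultimately show ?thesis using h ge by (simp add: power2_eq_square)
    next
      case False
      have h: "(1-c)*t^2 + 2*c*t + c^2 - (4-c)^2 = (4-t)*((c-1)*t + 2*c - 4)" by algebra
      have "0 \<le> (c-1)*t" using False t0 by simp
      then have "0 \<le> (c-1)*t + 2*c - 4" using False by simp
      then have "0 \<le> (4-t)*((c-1)*t + 2*c - 4)" using \<open>\<not> 4 \<le> t\<close> by simp
      moreover have "min c (4-c) = 4-c" using False by simp
      ultimately show ?thesis using h ge by simp
    qed
  qed
qed

lemma cmod_phi:
  "(cmod (phi_car z - complex_of_real a))^2 =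
     (((Re z+1)^2 - (Im z)^2 - (2*a-1))^2 + (2*(Re z+1)*Im z)^2)/4"
  unfolding cmod_power2 phi_car_def
  by (simp add: power2_eq_square field_simps)

theorem lemma2p2:
  fixes a :: real
  assumes "1/2 < a" and "a < 5/2"
  shows "ball (complex_of_real a) (r_a a) \<subseteq> Omega_car \<and>
         Omega_car \<subseteq> ball (complex_of_real a) (R_a a)"
proof
  define c where "c = 2*a - 1"
  have c0: "0 < c" "c < 4" using assms unfolding c_def by auto
  show "ball (complex_of_real a) (r_a a) \<subseteq> Omega_car"
  proof
    fix w assume "w \<in> ball (complex_of_real a) (r_a a)"
    then have wd: "cmod (w - complex_of_real a) < r_a a" by (simp add: dist_norm norm_minus_commute)
    define u where "u = csqrt (2*w - 1)"
    define z where "z = u - 1"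
    have u2: "u^2 = 2*w - 1" unfolding u_def by simp
    have "phi_car z = (u^2 + 1)/2" unfolding phi_car_def z_def by (simp add: power2_eq_square field_simps)
    then have pz: "phi_car z = w" using u2 by simp
    have "cmod z < 1"
    proof (rule ccontr)
      assume "\<not> cmod z < 1"
      then have "1 \<le> (cmod z)^2" by simp
      then have h1: "1 \<le> (Re u - 1)^2 + (Im u)^2" unfolding cmod_power2 z_def by simp
      have h2: "0 \<le> Re u" unfolding u_def by (rule Re_csqrt)
      have "(min c (4-c))^2 \<le> ((Re u)^2 - (Im u)^2 - c)^2 + (2*Re u*Im u)^2"
        using inner_real[OF h1 h2 c0] .
      also have "\<dots> = 4 * (cmod (w - complex_of_real a))^2"
        using cmod_phi[of z a] pz unfolding z_def c_def by simp
      finally have A: "(min c (4-c))^2 \<le> 4 * (cmod (w - complex_of_real a))^2" .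
      have "min c (4-c) = 2 * r_a a" unfolding r_a_def c_def by auto
      then have "(min c (4-c))^2 = 4 * (r_a a)^2" by (simp add: power2_eq_square)
      moreover have "(cmod (w - complex_of_real a))^2 < (r_a a)^2"
        using wd by (intro power_strict_mono) auto
      ultimately show False using A by linarith
    qed
    then show "w \<in> Omega_car" unfolding Omega_car_def using pz by force
  qed
  show "Omega_car \<subseteq> ball (complex_of_real a) (R_a a)"
  proof
    fix w assume "w \<in> Omega_car"
    then obtain z where z: "cmod z < 1" and wz: "w = phi_car z" unfolding Omega_car_def by auto
    have "(cmod z)^2 < 1" using z by (simp add: power_less_one_iff abs_less_iff)
    then have h1: "(Re z + 1 - 1)^2 + (Im z)^2 < 1" unfolding cmod_power2 by simp
    have B: "((Re z + 1)^2 - (Im z)^2 - c)^2 + (2*(Re z + 1)*Im z)^2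
            < (if c \<le> 4/3 then (4-c)^2 else c^3/(c-1))"
      using outer_real[OF h1 c0] .
    have Rpos: "0 < R_a a"
      using assms unfolding R_a_def by auto
    have "4 * (R_a a)^2 = (if c \<le> 4/3 then (4-c)^2 else c^3/(c-1))"
    proof (cases "a \<le> 7/6")
      case True
      then show ?thesis unfolding R_a_def c_def by (simp add: power2_eq_square field_simps)
    next
      case False
      have "0 \<le> (2*a - 1)^3 / (8*(a - 1))" using False assms by simp
      then have "(R_a a)^2 = (2*a - 1)^3 / (8*(a - 1))" unfolding R_a_def using False by simp
      moreover have "\<not> c \<le> 4/3" using False unfolding c_def by simp
      ultimately show ?thesis unfolding c_def by (simp add: field_simps)
    qed
    then have "(cmod (w - complex_of_real a))^2 < (R_a a)^2"
      using B cmod_phi[of z a] wz unfolding c_def by simp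
    then have "cmod (w - complex_of_real a) < R_a a"
      using Rpos by (meson abs_less_iff power2_less_imp_less less_le)
    then show "w \<in> ball (complex_of_real a) (R_a a)" by (simp add: dist_norm norm_minus_commute)
  qed
qed

end
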